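(* Let $\lambda$ be a nonzero real number and $\delta\in\mathbb{C}$ with $\mathrm{Re}(\delta)>0$. (i) For every $p\in\mathbb{N}$ and every real $x$ with $0<x<1/|\lambda|$, \[ \Big(\frac{d}{dx}x\Big)^{p}\big[x^{\delta-1}e_{\lambda}(x,\ \delta|p)\big]=x^{\delta-1}e_{\lambda}(x). \] (ii) For every complex $x$ with $|x|<1/|\lambda|$ and every $z\in\mathbb{C}$ with $|z|<|\delta|$, \[ \sum_{k=0}^{\infty}e_{\lambda}(x,\ \delta|k)z^{k}=e_{\lambda}(x)+z\,e_{\lambda}(x,\ \delta-z|1). \]
   Context: For nonzero real $\lambda$: $(1)_{0,\lambda}=1$, $(1)_{n,\lambda}=1(1-\lambda)\cdots(1-(n-1)\lambda)$ for $n\ge1$. $e_\lambda(x)=\sum_{n\ge0}(1)_{n,\lambda}x^n/n!$ $(=(1+\lambda x)^{1/\lambda}$ for real $x$ with $|\lambda x|<1)$. For $k\in\mathbb{N}\cup\{0\}$ and $\delta$ with $n+\delta\neq0$ for all $n\ge0$, $e_{\lambda}(x,\ \delta|k)=\sum_{n=0}^{\infty}\frac{(1)_{n,\lambda}}{n!\,(n+\delta)^{k}}x^{n}$ (in (ii), $e_\lambda(x,\delta-z|1)=\sum_{n\ge0}\frac{(1)_{n,\lambda}x^n}{n!(n+\delta-z)}$). The operator $\frac{d}{dx}x$ sends $f(x)$ to $\frac{d}{dx}\big(xf(x)\big)$, and $(\frac{d}{dx}x)^p$ is its $p$-fold iterate. For $x>0$, $x^{\delta-1}=\exp((\delta-1)\log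 x)$. *)

theory Defs
  imports "HOL-Analysis.Analysis"
begin

definition lam_fall :: "real \<Rightarrow> nat \<Rightarrow> real" where
  "lam_fall lam n = (\<Prod>i<n. 1 - of_nat i * lam)"

definition e_lam :: "real \<Rightarrow> complex \<Rightarrow> complex" where
  "e_lam lam x = (\<Sum>n. complex_of_real (lam_fall lam n) * x ^ n / of_nat (fact n))"

definition e_lam_poly :: "real \<Rightarrow> complex \<Rightarrow> complex \<Rightarrow> nat \<Rightarrow> complex" where
  "e_lam_poly lam x \<delta> k =
     (\<Sum>n. complex_of_real (lam_fall lam n) * x ^ n / (of_nat (fact n) * (of_nat n + \<delta>) ^ k))"

definition dx_x :: "(real \<Rightarrow> complex) \<Rightarrow> (real \<Rightarrow> complex)" where
  "dx_x f = (\<lambda>x. vector_derivative (\<lambda>t. complex_of_real t * f t) (at x))"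

definition cpow_real :: "real \<Rightarrow> complex \<Rightarrow> complex" where
  "cpow_real x a = exp (a * complex_of_real (ln x))"

end

theory Submission
  imports Defs "HOL-Analysis.Analysis"
begin


lemma lam_fall_Suc: "lam_fall lam (Suc n) = lam_fall lam n * (1 - of_nat n * lam)"
  unfolding lam_fall_def by (simp add: lessThan_Suc mult.commute)

lemma ratio_summable:
  assumes r0: "0 \<le> r" and rl: "r * \<bar>lam\<bar> < 1"
  shows "summable (\<lambda>n. \<bar>lam_fall lam n\<bar> / fact n * r ^ n)"
proof -
  define c where "c = (1 + r * \<bar>lam\<bar>) / 2"
  define N where "N = nat \<lceil>2 * r / (1 - r * \<bar>lam\<bar>)\<rceil>"
  have c1: "c < 1" using rl by (simp add: c_def)
  show ?thesis
  proof (rule summable_ratio_test[OF c1, of N])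
    fix n assume "N \<le> n"
    hence nN: "2 * r / (1 - r * \<bar>lam\<bar>) \<le> real n" unfolding N_def by linarith
    hence "2 * r \<le> real n * (1 - r * \<bar>lam\<bar>)" using rl by (simp add: pos_divide_le_eq mult.commute)
    hence key0: "r * (1 + real n * \<bar>lam\<bar>) \<le> c * (real n + 1)"
    proof -
      have "0 \<le> r * \<bar>lam\<bar>" using r0 by simp
      thus ?thesis using \<open>2 * r \<le> real n * (1 - r * \<bar>lam\<bar>)\<close>
        unfolding c_def by (simp add: algebra_simps)
    qed
    have "\<bar>1 - real n * lam\<bar> \<le> 1 + real n * \<bar>lam\<bar>"
      by (metis abs_mult abs_of_nat abs_one abs_triangle_ineq4)
    hence "\<bar>1 - real n * lam\<bar> * r \<le> (1 + real n * \<bar>lam\<bar>) * r"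
      using r0 by (rule mult_right_mono)
    hence "\<bar>1 - real n * lam\<bar> * r \<le> c * (real n + 1)" using key0 by (simp add: mult.commute)
    hence key: "\<bar>1 - real n * lam\<bar> * r / (real n + 1) \<le> c"
      by (simp add: pos_divide_le_eq)
    have f: "(fact (Suc n) :: real) = (real n + 1) * fact n" by simp
    have eq: "\<bar>lam_fall lam (Suc n)\<bar> / fact (Suc n) * r ^ Suc n
       = (\<bar>lam_fall lam n\<bar> / fact n * r ^ n) * (\<bar>1 - real n * lam\<bar> * r / (real n + 1))"
      unfolding f lam_fall_Suc abs_mult power_Suc by (simp add: divide_simps)
    have nn: "0 \<le> \<bar>lam_fall lam n\<bar> / fact n * r ^ n" using r0 by simp
    show "norm (\<bar>lam_fall lam (Suc n)\<bar> / fact (Suc n) * r ^ Suc n)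
          \<le> c * norm (\<bar>lam_fall lam n\<bar> / fact n * r ^ n)"
      using r0 unfolding eq using mult_left_mono[OF key nn]
      by (simp add: abs_mult mult.commute)
  qed
qed

lemma norm_delta_le:
  assumes "Re \<delta> > 0"
  shows "norm \<delta> \<le> norm (of_nat n + \<delta>)"
proof -
  have "(Re \<delta>)^2 \<le> (real n + Re \<delta>)^2" using assms by (intro power_mono) auto
  thus ?thesis unfolding cmod_def by (intro real_sqrt_le_mono) simp
qed

lemma gen_summable:
  fixes x :: complex
  assumes "norm x * \<bar>lam\<bar> < 1" "\<And>n. norm (w n) \<le> M"
  shows "summable (\<lambda>n. norm (complex_of_real (lam_fall lam n) * x ^ n / of_nat (fact n) * w n))"
proof -
  have "summable (\<lambda>n. M * (\<bar>lam_fall lam n\<bar> / fact n * norm x ^ n))"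
    using ratio_summable[of "norm x" lam] assms by (intro summable_mult) auto
  thus ?thesis
  proof (rule summable_comparison_test')
    fix n
    have "norm (w n) * (\<bar>lam_fall lam n\<bar> / fact n * norm x ^ n) \<le> M * (\<bar>lam_fall lam n\<bar> / fact n * norm x ^ n)"
      using assms(2) by (intro mult_right_mono) auto
    thus "norm (norm (complex_of_real (lam_fall lam n) * x ^ n / of_nat (fact n) * w n)) \<le> M * (\<bar>lam_fall lam n\<bar> / fact n * norm x ^ n)"
      by (simp add: norm_mult norm_divide norm_power mult_ac)
  qed
qed



lemma infsum_nat_suminf:
  fixes g :: "nat \<Rightarrow> 'a::{topological_comm_monoid_add, t2_space}"
  assumes "g summable_on UNIV"
  shows "infsum g UNIV = suminf g"
  using has_sum_imp_sums[OF has_sum_infsum[OF assms]] by (simp add: sums_iff)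

lemma part2:
  fixes x z \<delta> :: complex
  assumes d0: "Re \<delta> > 0" and xl: "norm x * \<bar>lam\<bar> < 1" and zd: "norm z < norm \<delta>"
  shows "(\<Sum>k. e_lam_poly lam x \<delta> k * z ^ k) = e_lam lam x + z * e_lam_poly lam x (\<delta> - z) 1"
proof -
  define b where "b n = complex_of_real (lam_fall lam n) * x ^ n / of_nat (fact n)" for n
  define q where "q n = z / (of_nat n + \<delta>)" for n
  define \<rho> where "\<rho> = norm z / norm \<delta>"
  define F where "F n k = b n * q n ^ k" for n k
  have nd: "norm \<delta> > 0" using d0 by (metis zero_less_norm_iff zero_complex.simps(1) less_irrefl)
  have \<rho>1: "\<rho> < 1" and \<rho>0: "0 \<le> \<rho>" using zd nd by (auto simp: \<rho>_def)
  have dn: "norm \<delta> \<le> norm (of_nat n + \<delta>)" for n using norm_delta_le[OF d0] .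
  have dnz: "of_nat n + \<delta> \<noteq> 0" for n using dn[of n] nd by auto
  have qle: "norm (q n) \<le> \<rho>" for n
    unfolding q_def \<rho>_def norm_divide using dn[of n] nd dnz[of n]
    by (intro divide_left_mono) auto
  have q1: "norm (q n) < 1" for n using qle[of n] \<rho>1 by linarith
  have dzn: "norm \<delta> - norm z \<le> norm (of_nat n + \<delta> - z)" for n
    using dn[of n] norm_triangle_ineq2[of "of_nat n + \<delta>" z] by linarith
  have dzz: "of_nat n + \<delta> - z \<noteq> 0" for n using dzn[of n] zd by auto
  have sb: "summable (\<lambda>n. norm (b n * w n))" if "\<And>n. norm (w n) \<le> M" for w M
    unfolding b_def using gen_summable[OF xl that] .
  have sbn: "summable (\<lambda>n. norm (b n) * M)" if "0 \<le> M" for M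
    using sb[of "\<lambda>_. of_real M" M] that by (simp add: norm_mult)
  have row_sums: "(\<lambda>k. norm (F n k)) sums (norm (b n) / (1 - norm (q n)))" for n
    using sums_mult[OF geometric_sums[of "norm (q n)"], of "norm (b n)"] q1[of n]
    by (simp add: F_def norm_mult norm_power divide_simps)
  have row_has: "((\<lambda>k. norm (F n k)) has_sum (norm (b n) / (1 - norm (q n)))) UNIV" for n
    by (rule sums_nonneg_imp_has_sum_strong[OF row_sums]) auto
  have abs: "(\<lambda>p. norm ((\<lambda>(n,k). F n k) p)) summable_on UNIV \<times> UNIV"
  proof (subst Infinite_Sum.abs_summable_on_Sigma_iff, intro conjI ballI)
    fix n :: nat
    show "(\<lambda>k. norm ((\<lambda>(n,k). F n k) (n, k))) summable_on UNIV"
      using row_has[of n] by (auto simp: summable_on_def)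
  next
    have "(\<lambda>n. norm (b n) * (1 / (1 - \<rho>))) summable_on UNIV"
      by (rule norm_summable_imp_summable_on) (use sbn[of "1/(1-\<rho>)"] \<rho>1 in simp)
    then show "(\<lambda>n. norm (infsum (\<lambda>k. norm ((\<lambda>(n,k). F n k) (n, k))) UNIV)) summable_on UNIV"
    proof (rule summable_on_comparison_test)
      fix n :: nat
      have e: "infsum (\<lambda>k. norm ((\<lambda>(n,k). F n k) (n, k))) UNIV = norm (b n) / (1 - norm (q n))"
        using infsumI[OF row_has[of n]] by simp
      have "norm (b n) / (1 - norm (q n)) \<le> norm (b n) * (1 / (1 - \<rho>))"
        using qle[of n] \<rho>1 q1[of n] by (simp add: divide_simps mult_left_mono)
      moreover have "0 \<le> norm (b n) / (1 - norm (q n))" using q1[of n] by simp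
      ultimately show "norm (infsum (\<lambda>k. norm ((\<lambda>(n,k). F n k) (n, k))) UNIV) \<le> norm (b n) * (1 / (1 - \<rho>))"
        unfolding e using q1[of n] by simp
    qed simp
  qed
  have summ: "(\<lambda>(n,k). F n k) summable_on UNIV \<times> UNIV"
    by (rule abs_summable_summable[OF abs])
  have summ': "(\<lambda>(k,n). F n k) summable_on UNIV \<times> UNIV"
    using summ summable_on_swap[of "\<lambda>(n,k). F n k" UNIV UNIV] by (simp add: case_prod_unfold)
  have rows: "(\<lambda>k. F n k) summable_on UNIV" for n
    using summable_on_SigmaD1[OF summ] by auto
  have cols: "(\<lambda>n. F n k) summable_on UNIV" for k
    using summable_on_SigmaD1[OF summ', of k] by auto
  have swap: "infsum (\<lambda>n. infsum (\<lambda>k. F n k) UNIV) UNIV = infsum (\<lambda>k. infsum (\<lambda>n. F n k) UNIV) UNIV"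
    by (rule infsum_swap_banach[OF summ])
  have outer1: "(\<lambda>n. infsum (\<lambda>k. F n k) UNIV) summable_on UNIV"
    using summable_on_SigmaD[OF summ] rows by (auto simp: case_prod_unfold)
  have outer2: "(\<lambda>k. infsum (\<lambda>n. F n k) UNIV) summable_on UNIV"
    using summable_on_SigmaD[OF summ'] cols by (auto simp: case_prod_unfold)
  have swap2: "(\<Sum>n. \<Sum>k. F n k) = (\<Sum>k. \<Sum>n. F n k)"
    using swap outer1 outer2 rows cols by (simp add: infsum_nat_suminf)
  have lhs: "e_lam_poly lam x \<delta> k * z ^ k = (\<Sum>n. F n k)" for k
  proof -
    have s: "summable (\<lambda>n. b n * (1 / (of_nat n + \<delta>) ^ k))"
    proof (rule summable_norm_cancel, rule sb)
      fix n
      show "norm (1 / (of_nat n + \<delta>) ^ k) \<le> 1 / norm \<delta> ^ k"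
        using dn[of n] nd by (simp add: norm_divide norm_power divide_simps power_mono)
    qed
    have "e_lam_poly lam x \<delta> k = (\<Sum>n. b n * (1 / (of_nat n + \<delta>) ^ k))"
      unfolding e_lam_poly_def b_def by simp
    hence "e_lam_poly lam x \<delta> k * z ^ k = (\<Sum>n. b n * (1 / (of_nat n + \<delta>) ^ k) * z ^ k)"
      using suminf_mult2[OF s] by simp
    also have "\<dots> = (\<Sum>n. F n k)"
      unfolding F_def q_def by (simp add: power_divide)
    finally show ?thesis .
  qed
  have rowv: "(\<Sum>k. F n k) = b n + z * (b n * (1 / (of_nat n + \<delta> - z)))" for n
  proof -
    have "(\<Sum>k. F n k) = b n * (1 / (1 - q n))"
      unfolding F_def using suminf_mult[OF summable_geometric[OF q1[of n]], of "b n"] suminf_geometric[OF q1[of n]]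
      by simp
    also have "\<dots> = b n + z * (b n * (1 / (of_nat n + \<delta> - z)))"
      unfolding q_def using dnz[of n] dzz[of n] by (simp add: field_simps)
    finally show ?thesis .
  qed
  have s1: "summable b" using summable_norm_cancel[OF sb[of "\<lambda>_. 1" 1]] by simp
  have s2: "summable (\<lambda>n. b n * (1 / (of_nat n + \<delta> - z)))"
  proof (rule summable_norm_cancel, rule sb)
    fix n
    show "norm (1 / (of_nat n + \<delta> - z)) \<le> 1 / (norm \<delta> - norm z)"
      using dzn[of n] zd by (simp add: norm_divide divide_simps)
  qed
  have "(\<Sum>k. e_lam_poly lam x \<delta> k * z ^ k) = (\<Sum>n. b n + z * (b n * (1 / (of_nat n + \<delta> - z))))"
    using lhs swap2 rowv by simp
  also have "\<dots> = suminf b + z * (\<Sum>n. b n * (1 / (of_nat n + \<delta> - z)))"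
    using suminf_add[OF s1 summable_mult[OF s2, of z]] suminf_mult[OF s2, of z] by simp
  also have "suminf b = e_lam lam x" unfolding e_lam_def b_def by simp
  also have "(\<Sum>n. b n * (1 / (of_nat n + \<delta> - z))) = e_lam_poly lam x (\<delta> - z) 1"
    unfolding e_lam_poly_def b_def by (simp add: algebra_simps)
  finally show ?thesis .
qed



lemma shift_key:
  fixes c :: "nat \<Rightarrow> complex" and w \<delta> :: complex
  assumes s1: "summable (\<lambda>n. diffs c n * w ^ n)" and s2: "summable (\<lambda>n. c n * w ^ n)"
  shows "w * (\<Sum>n. diffs c n * w ^ n) + \<delta> * (\<Sum>n. c n * w ^ n) = (\<Sum>n. ((of_nat n + \<delta>) * c n) * w ^ n)"
proof -
  define g where "g n = of_nat n * c n * w ^ n" for n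
  have "(\<lambda>n. w * (diffs c n * w ^ n)) sums (w * (\<Sum>n. diffs c n * w ^ n))"
    by (rule sums_mult[OF summable_sums[OF s1]])
  moreover have "(\<lambda>n. w * (diffs c n * w ^ n)) = (\<lambda>n. g (Suc n))"
    by (auto simp: g_def diffs_def algebra_simps)
  ultimately have "(\<lambda>n. g (Suc n)) sums (w * (\<Sum>n. diffs c n * w ^ n))" by simp
  hence "g sums (w * (\<Sum>n. diffs c n * w ^ n) + g 0)" using sums_Suc_iff[of g] by simp
  moreover have "g 0 = 0" by (simp add: g_def)
  ultimately have "g sums (w * (\<Sum>n. diffs c n * w ^ n))" by simp
  from sums_add[OF this sums_mult[OF summable_sums[OF s2], of \<delta>]]
  have "(\<lambda>n. g n + \<delta> * (c n * w ^ n)) sums (w * (\<Sum>n. diffs c n * w ^ n) + \<delta> * (\<Sum>n. c n * w ^ n))" .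
  moreover have "(\<lambda>n. g n + \<delta> * (c n * w ^ n)) = (\<lambda>n. ((of_nat n + \<delta>) * c n) * w ^ n)"
    by (auto simp: g_def algebra_simps)
  ultimately show ?thesis by (simp add: sums_iff)
qed

lemma cpow_real_mult:
  assumes "t > 0"
  shows "cpow_real t \<delta> = complex_of_real t * cpow_real t (\<delta> - 1)"
proof -
  have "cpow_real t \<delta> = exp ((\<delta> - 1) * complex_of_real (ln t) + complex_of_real (ln t))"
    unfolding cpow_real_def by (simp add: algebra_simps)
  also have "\<dots> = cpow_real t (\<delta> - 1) * complex_of_real t"
    unfolding exp_add cpow_real_def using assms by (simp add: exp_of_real)
  finally show ?thesis by simp
qed

lemma cpow_deriv:
  assumes "t > 0"
  shows "((\<lambda>s. cpow_real s \<delta>) has_vector_derivative (complex_of_real (inverse t) * (\<delta> * cpow_real t \<delta>))) (at t)"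
proof -
  have d1: "((\<lambda>s. complex_of_real (ln s)) has_vector_derivative complex_of_real (inverse t)) (at t)"
    by (rule has_vector_derivative_of_real[OF DERIV_ln[OF assms]])
  have d2: "((\<lambda>u. exp (\<delta> * u)) has_field_derivative (\<delta> * exp (\<delta> * complex_of_real (ln t)))) (at (complex_of_real (ln t)))"
    by (auto intro!: derivative_eq_intros)
  from field_vector_diff_chain_at[OF d1 d2] show ?thesis
    by (simp add: comp_def cpow_real_def)
qed

definition cc :: "real \<Rightarrow> complex \<Rightarrow> nat \<Rightarrow> nat \<Rightarrow> complex" where
  "cc lam \<delta> j n = complex_of_real (lam_fall lam n) / (of_nat (fact n) * (of_nat n + \<delta>) ^ j)"

lemma e_lam_poly_cc: "e_lam_poly lam w \<delta> j = (\<Sum>n. cc lam \<delta> j n * w ^ n)"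
  unfolding e_lam_poly_def cc_def by simp

lemma cc_summable:
  assumes d0: "Re \<delta> > 0" and "norm w * \<bar>lam\<bar> < 1"
  shows "summable (\<lambda>n. cc lam \<delta> j n * w ^ n)"
proof -
  have nd: "norm \<delta> > 0" using d0 by (metis zero_less_norm_iff zero_complex.simps(1) less_irrefl)
  have "summable (\<lambda>n. norm (complex_of_real (lam_fall lam n) * w ^ n / of_nat (fact n) * (1 / (of_nat n + \<delta>) ^ j)))"
  proof (rule gen_summable[OF assms(2)])
    fix n
    show "norm (1 / (of_nat n + \<delta>) ^ j) \<le> 1 / norm \<delta> ^ j"
      using norm_delta_le[OF d0, of n] nd by (simp add: norm_divide norm_power divide_simps power_mono)
  qed
  from summable_norm_cancel[OF this] show ?thesis
    unfolding cc_def by simp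
qed

lemma deriv_step:
  assumes d0: "Re \<delta> > 0" and lam: "lam \<noteq> 0" and k: "k \<ge> 1" and t0: "0 < t" and tl: "t * \<bar>lam\<bar> < 1"
  shows "((\<lambda>s. complex_of_real s * (cpow_real s (\<delta> - 1) * e_lam_poly lam (complex_of_real s) \<delta> k))
           has_vector_derivative (cpow_real t (\<delta> - 1) * e_lam_poly lam (complex_of_real t) \<delta> (k - 1))) (at t)"
proof -
  define K where "K = 1 / \<bar>lam\<bar>"
  have sK: "summable (\<lambda>n. cc lam \<delta> j n * z ^ n)" if "norm z < K" for z j
    using cc_summable[OF d0, of z lam j] that lam by (simp add: K_def field_simps)
  have tK: "norm (complex_of_real t) < K" using tl t0 lam by (simp add: K_def field_simps)
  define G where "G j w = (\<Sum>n. cc lam \<delta> j n * w ^ n)" for j w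
  define G' where "G' = (\<Sum>n. diffs (cc lam \<delta> k) n * complex_of_real t ^ n)"
  have DG: "((\<lambda>s. G k (complex_of_real s)) has_vector_derivative G') (at t)"
    unfolding G_def G'_def
    by (rule has_vector_derivative_real_field[OF termdiffs_strong'[OF sK tK]])
  have DP: "((\<lambda>s. cpow_real s \<delta>) has_vector_derivative (complex_of_real (inverse t) * (\<delta> * cpow_real t \<delta>))) (at t)"
    by (rule cpow_deriv[OF t0])
  have D: "((\<lambda>s. cpow_real s \<delta> * G k (complex_of_real s)) has_vector_derivative
      (cpow_real t \<delta> * G' + complex_of_real (inverse t) * (\<delta> * cpow_real t \<delta>) * G k (complex_of_real t))) (at t)"
    by (rule has_vector_derivative_mult[OF DP DG])
  have key: "complex_of_real t * G' + \<delta> * G k (complex_of_real t) = G (k - 1) (complex_of_real t)"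
  proof -
    have "complex_of_real t * G' + \<delta> * G k (complex_of_real t)
        = (\<Sum>n. ((of_nat n + \<delta>) * cc lam \<delta> k n) * complex_of_real t ^ n)"
      unfolding G'_def G_def
      by (rule shift_key[OF termdiff_converges[OF tK sK] sK[OF tK]])
    also have "\<dots> = G (k - 1) (complex_of_real t)"
    proof -
      have "(of_nat n + \<delta>) * cc lam \<delta> k n = cc lam \<delta> (k - 1) n" for n
      proof -
        have nz: "of_nat n + \<delta> \<noteq> 0" using d0 by (metis add_cancel_right_left norm_delta_le[OF d0, of n] norm_zero not_less zero_less_norm_iff zero_complex.simps(1) less_irrefl)
        have "(of_nat n + \<delta>) ^ k = (of_nat n + \<delta>) * (of_nat n + \<delta>) ^ (k - 1)"
          using k by (metis Suc_diff_1 less_le_trans power_Suc zero_less_one)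
        moreover have "x * (a / (F * (x * p))) = a / (F * p)" if "x \<noteq> 0" for x a F p :: complex
          using that by (simp add: divide_simps)
        ultimately show ?thesis unfolding cc_def using nz by simp
      qed
      thus ?thesis unfolding G_def by simp
    qed
    finally show ?thesis .
  qed
  have val: "cpow_real t \<delta> * G' + complex_of_real (inverse t) * (\<delta> * cpow_real t \<delta>) * G k (complex_of_real t)
      = cpow_real t (\<delta> - 1) * G (k - 1) (complex_of_real t)"
  proof -
    have "cpow_real t \<delta> * G' + complex_of_real (inverse t) * (\<delta> * cpow_real t \<delta>) * G k (complex_of_real t)
        = cpow_real t (\<delta> - 1) * (complex_of_real t * G' + \<delta> * G k (complex_of_real t))"
      unfolding cpow_real_mult[OF t0, of \<delta>] using t0 by (simp add: field_simps)
    thus ?thesis using key by simp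
  qed
  have ge: "G (k - 1) (complex_of_real t) = e_lam_poly lam (complex_of_real t) \<delta> (k - 1)"
    by (simp add: G_def e_lam_poly_cc)
  show ?thesis
  proof (rule has_vector_derivative_transform_within_open[OF D[unfolded val ge]])
    show "open {0::real<..}" by simp
    show "t \<in> {0<..}" using t0 by simp
    fix y :: real assume "y \<in> {0<..}"
    thus "cpow_real y \<delta> * G k (complex_of_real y) = complex_of_real y * (cpow_real y (\<delta> - 1) * e_lam_poly lam (complex_of_real y) \<delta> k)"
      unfolding G_def e_lam_poly_cc using cpow_real_mult[of y \<delta>] by simp
  qed
qed



theorem theorem3:
  fixes lam :: real and \<delta> :: complex
  assumes "lam \<noteq> 0" and "Re \<delta> > 0"
  shows "(\<forall>(p::nat) (x::real). p \<ge> 1 \<longrightarrow> 0 < x \<longrightarrow> x < 1 / \<bar>lam\<bar> \<longrightarrow>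
            (dx_x ^^ p) (\<lambda>t. cpow_real t (\<delta> - 1) * e_lam_poly lam (complex_of_real t) \<delta> p) x
              = cpow_real x (\<delta> - 1) * e_lam lam (complex_of_real x))
       \<and> (\<forall>(x::complex) (z::complex). norm x < 1 / \<bar>lam\<bar> \<longrightarrow> norm z < norm \<delta> \<longrightarrow>
            (\<Sum>k. e_lam_poly lam x \<delta> k * z ^ k) = e_lam lam x + z * e_lam_poly lam x (\<delta> - z) 1)"
proof (intro conjI allI impI)
  fix x z :: complex
  assume "norm x < 1 / \<bar>lam\<bar>" "norm z < norm \<delta>"
  moreover have "norm x * \<bar>lam\<bar> < 1" using calculation(1) assms(1) by (simp add: field_simps)
  ultimately show "(\<Sum>k. e_lam_poly lam x \<delta> k * z ^ k) = e_lam lam x + z * e_lam_poly lam x (\<delta> - z) 1"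
    using part2[OF assms(2)] by blast
next
  fix p :: nat and x :: real
  assume "p \<ge> 1" and x0: "0 < x" and xl: "x < 1 / \<bar>lam\<bar>"
  define F where "F k = (\<lambda>t. cpow_real t (\<delta> - 1) * e_lam_poly lam (complex_of_real t) \<delta> k)" for k
  define S where "S = {0::real<..<1 / \<bar>lam\<bar>}"
  have oS: "open S" by (simp add: S_def)
  have claim: "j \<le> p \<Longrightarrow> (\<forall>y\<in>S. (dx_x ^^ j) (F p) y = F (p - j) y)" for j
  proof (induction j)
    case 0 thus ?case by simp
  next
    case (Suc j)
    hence IH: "\<forall>y\<in>S. (dx_x ^^ j) (F p) y = F (p - j) y" by simp
    show ?case
    proof
      fix y assume yS: "y \<in> S"
      hence y0: "0 < y" and yl: "y * \<bar>lam\<bar> < 1" using assms(1) by (auto simp: S_def field_simps)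
      have D: "((\<lambda>s. complex_of_real s * F (p - j) s) has_vector_derivative F (p - j - 1) y) (at y)"
        unfolding F_def using deriv_step[OF assms(2) assms(1) _ y0 yl, of "p - j"] Suc.prems by simp
      have D2: "((\<lambda>s. complex_of_real s * (dx_x ^^ j) (F p) s) has_vector_derivative F (p - j - 1) y) (at y)"
        by (rule has_vector_derivative_transform_within_open[OF D oS yS]) (use IH in simp)
      have "(dx_x ^^ Suc j) (F p) y = vector_derivative (\<lambda>s. complex_of_real s * (dx_x ^^ j) (F p) s) (at y)"
        by (simp add: dx_x_def)
      also have "\<dots> = F (p - Suc j) y" using vector_derivative_at[OF D2] by simp
      finally show "(dx_x ^^ Suc j) (F p) y = F (p - Suc j) y" .
    qed
  qed
  have "x \<in> S" using x0 xl by (simp add: S_def)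
  hence "(dx_x ^^ p) (F p) x = F 0 x" using claim[of p] by simp
  moreover have "e_lam_poly lam (complex_of_real x) \<delta> 0 = e_lam lam (complex_of_real x)"
    unfolding e_lam_poly_def e_lam_def by simp
  ultimately show "(dx_x ^^ p) (\<lambda>t. cpow_real t (\<delta> - 1) * e_lam_poly lam (complex_of_real t) \<delta> p) x
              = cpow_real x (\<delta> - 1) * e_lam lam (complex_of_real x)"
    unfolding F_def by simp
qed

end
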